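(* Let $G$ be a finitely generated group satisfying the Morse local-to-global property. Then the Morse boundary $\partial_* G$ is strongly $\sigma$-compact.
   Context: A Morse gauge is a non-decreasing continuous function $M:\mathbb{R}_{\geq 1}\to\mathbb{R}_{\geq 0}$. A continuous map $\gamma:I\to X$ is a $Q$--quasi-geodesic ($Q\ge 1$) if $|t-s|/Q-Q\le d(\gamma(s),\gamma(t))\le Q|t-s|+Q$ for all $s,t\in I$. A quasi-geodesic $\gamma$ is $M$--Morse if every $Q$--quasi-geodesic with endpoints $\gamma(s),\gamma(t)$ lies in the closed $M(Q)$--neighbourhood of $\gamma[s,t]$; it is Morse if it is $M$--Morse for some Morse gauge $M$. For a proper geodesic metric space $X$ with basepoint $x_0$, the Morse boundary $\partial_*X$ is the set of Morse geodesic rays (based at $x_0$) up to bounded Hausdorff distance, with the topology of Cordes; for a Morse gauge $M$, the $M$--stratum $\partial^M_{x_0}X$ is the subset of classes represented by $M$--Morse geodesic rays starting at $x_0$. For a finitely generated group $G$, $\partial_*G$ is the Morse boundary of a Cayley graph (a quasi-isometry invariant). $\partial_*X$ is strongly $\sigma$-compact if there is an increasing sequence of Morse gauges $(M_n)_{n\in\mathbb{N}}$ with $\partial_*X=\bigcup_n\partial^{M_n}_{x_0}X$ and such that for every Morse gauge $M$ there is $n$ with $\partial^{M}_{x_0}X\subset\partial^{M_n}_{x_0}X$. A path $p:I\to X$ is $L$--locally an $M$--Morse $Q$--quasi-geodesic if for all $s,t\in I$ with $|t-s|\le L$ the subpath $p[s,t]$ is an $M$--Morse $Q$--quasi-geodesic.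 A space $X$ has the Morse local-to-global (MLTG) property if for every $Q\ge1$ and Morse gauge $M$ there exist a scale $L$, a constant $Q'\ge 1$ and a Morse gauge $M'$ such that every path that is $L$--locally an $M$--Morse $Q$--quasi-geodesic is an $M'$--Morse $Q'$--quasi-geodesic. A finitely generated group has the MLTG property if its Cayley graph with respect to a finite generating set does. *)

theory Defs
  imports "HOL-Analysis.Analysis" "HOL-Algebra.Generated_Groups"
begin

definition morse_gauge :: "(real \<Rightarrow> real) \<Rightarrow> bool" where
  "morse_gauge M \<longleftrightarrow> mono_on {1..} M \<and> continuous_on {1..} M \<and> (\<forall>q\<ge>1. M q \<ge> 0)"

definition mpath :: "'p set \<Rightarrow> ('p \<Rightarrow> 'p \<Rightarrow> real) \<Rightarrow> (real \<Rightarrow> 'p) \<Rightarrow> real set \<Rightarrow> bool" where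
  "mpath X d p I \<longleftrightarrow> is_interval I \<and> I \<noteq> {} \<and> p ` I \<subseteq> X \<and>
     (\<forall>t\<in>I. \<forall>e>0. \<exists>\<delta>>0. \<forall>s\<in>I. \<bar>s - t\<bar> < \<delta> \<longrightarrow> d (p s) (p t) < e)"

definition quasi_geodesic :: "'p set \<Rightarrow> ('p \<Rightarrow> 'p \<Rightarrow> real) \<Rightarrow> real \<Rightarrow> (real \<Rightarrow> 'p) \<Rightarrow> real set \<Rightarrow> bool" where
  "quasi_geodesic X d Q p I \<longleftrightarrow> Q \<ge> 1 \<and> mpath X d p I \<and>
     (\<forall>s\<in>I. \<forall>t\<in>I. \<bar>t - s\<bar> / Q - Q \<le> d (p s) (p t) \<and> d (p s) (p t) \<le> Q * \<bar>t - s\<bar> + Q)"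

definition cl_nbhd :: "('p \<Rightarrow> 'p \<Rightarrow> real) \<Rightarrow> 'p set \<Rightarrow> real \<Rightarrow> 'p set" where
  "cl_nbhd d A r = {x. A \<noteq> {} \<and> Inf ((\<lambda>y. d x y) ` A) \<le> r}"

definition is_morse :: "'p set \<Rightarrow> ('p \<Rightarrow> 'p \<Rightarrow> real) \<Rightarrow> (real \<Rightarrow> real) \<Rightarrow> (real \<Rightarrow> 'p) \<Rightarrow> real set \<Rightarrow> bool" where
  "is_morse X d M p I \<longleftrightarrow> (\<exists>Q0. quasi_geodesic X d Q0 p I) \<and>
     (\<forall>Q\<ge>1. \<forall>s\<in>I. \<forall>t\<in>I. s \<le> t \<longrightarrow>
        (\<forall>\<beta> a b. a \<le> b \<and> quasi_geodesic X d Q \<beta> {a..b} \<and> \<beta> a = p s \<and> \<beta> b = p t \<longrightarrow>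
           \<beta> ` {a..b} \<subseteq> cl_nbhd d (p ` {s..t}) (M Q)))"

definition geodesic_ray :: "'p set \<Rightarrow> ('p \<Rightarrow> 'p \<Rightarrow> real) \<Rightarrow> 'p \<Rightarrow> (real \<Rightarrow> 'p) \<Rightarrow> bool" where
  "geodesic_ray X d x0 \<gamma> \<longleftrightarrow> \<gamma> 0 = x0 \<and> \<gamma> ` {0..} \<subseteq> X \<and>
     (\<forall>s\<ge>0. \<forall>t\<ge>0. d (\<gamma> s) (\<gamma> t) = \<bar>s - t\<bar>)"

definition morse_ray :: "'p set \<Rightarrow> ('p \<Rightarrow> 'p \<Rightarrow> real) \<Rightarrow> 'p \<Rightarrow> (real \<Rightarrow> 'p) \<Rightarrow> bool" where
  "morse_ray X d x0 \<gamma> \<longleftrightarrow> geodesic_ray X d x0 \<gamma> \<and> (\<exists>M. morse_gauge M \<and> is_morse X d M \<gamma> {0..})"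

definition hausdorff_close :: "('p \<Rightarrow> 'p \<Rightarrow> real) \<Rightarrow> (real \<Rightarrow> 'p) \<Rightarrow> (real \<Rightarrow> 'p) \<Rightarrow> bool" where
  "hausdorff_close d \<gamma> \<eta> \<longleftrightarrow> (\<exists>C. (\<forall>s\<ge>0. \<exists>t\<ge>0. d (\<gamma> s) (\<eta> t) \<le> C) \<and> (\<forall>t\<ge>0. \<exists>s\<ge>0. d (\<gamma> s) (\<eta> t) \<le> C))"

definition ray_class :: "'p set \<Rightarrow> ('p \<Rightarrow> 'p \<Rightarrow> real) \<Rightarrow> 'p \<Rightarrow> (real \<Rightarrow> 'p) \<Rightarrow> (real \<Rightarrow> 'p) set" where
  "ray_class X d x0 \<gamma> = {\<eta>. morse_ray X d x0 \<eta> \<and> hausdorff_close d \<gamma> \<eta>}"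

definition morse_boundary :: "'p set \<Rightarrow> ('p \<Rightarrow> 'p \<Rightarrow> real) \<Rightarrow> 'p \<Rightarrow> (real \<Rightarrow> 'p) set set" where
  "morse_boundary X d x0 = ray_class X d x0 ` {\<gamma>. morse_ray X d x0 \<gamma>}"

definition morse_stratum :: "'p set \<Rightarrow> ('p \<Rightarrow> 'p \<Rightarrow> real) \<Rightarrow> 'p \<Rightarrow> (real \<Rightarrow> real) \<Rightarrow> (real \<Rightarrow> 'p) set set" where
  "morse_stratum X d x0 M = ray_class X d x0 ` {\<gamma>. geodesic_ray X d x0 \<gamma> \<and> is_morse X d M \<gamma> {0..}}"

definition strongly_sigma_compact :: "'p set \<Rightarrow> ('p \<Rightarrow> 'p \<Rightarrow> real) \<Rightarrow> 'p \<Rightarrow> bool" where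
  "strongly_sigma_compact X d x0 \<longleftrightarrow> (\<exists>Ms :: nat \<Rightarrow> real \<Rightarrow> real.
     (\<forall>n. morse_gauge (Ms n)) \<and> (\<forall>n. \<forall>q\<ge>1. Ms n q \<le> Ms (Suc n) q) \<and>
     morse_boundary X d x0 = (\<Union>n. morse_stratum X d x0 (Ms n)) \<and>
     (\<forall>M. morse_gauge M \<longrightarrow> (\<exists>n. morse_stratum X d x0 M \<subseteq> morse_stratum X d x0 (Ms n))))"

definition locally_morse_qg :: "'p set \<Rightarrow> ('p \<Rightarrow> 'p \<Rightarrow> real) \<Rightarrow> real \<Rightarrow> (real \<Rightarrow> real) \<Rightarrow> real \<Rightarrow> (real \<Rightarrow> 'p) \<Rightarrow> real set \<Rightarrow> bool" where
  "locally_morse_qg X d L M Q p I \<longleftrightarrow> mpath X d p I \<and>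
     (\<forall>s\<in>I. \<forall>t\<in>I. s \<le> t \<and> t - s \<le> L \<longrightarrow> quasi_geodesic X d Q p {s..t} \<and> is_morse X d M p {s..t})"

definition MLTG :: "'p set \<Rightarrow> ('p \<Rightarrow> 'p \<Rightarrow> real) \<Rightarrow> bool" where
  "MLTG X d \<longleftrightarrow> (\<forall>Q\<ge>1. \<forall>M. morse_gauge M \<longrightarrow> (\<exists>L Q' M'. Q' \<ge> 1 \<and> morse_gauge M' \<and>
     (\<forall>p I. locally_morse_qg X d L M Q p I \<longrightarrow> quasi_geodesic X d Q' p I \<and> is_morse X d M' p I)))"

definition cay_adj :: "('a, 'b) monoid_scheme \<Rightarrow> 'a set \<Rightarrow> ('a \<times> 'a) set" where
  "cay_adj G S = {(g, h). g \<in> carrier G \<and> h \<in> carrier G \<and> g \<noteq> h \<and>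
      (\<exists>s\<in>S. h = g \<otimes>\<^bsub>G\<^esub> s \<or> g = h \<otimes>\<^bsub>G\<^esub> s)}"

definition cay_vdist :: "('a, 'b) monoid_scheme \<Rightarrow> 'a set \<Rightarrow> 'a \<Rightarrow> 'a \<Rightarrow> real" where
  "cay_vdist G S g h = real (LEAST n. (g, h) \<in> (cay_adj G S) ^^ n)"

text \<open>Points of the geometric realisation: a vertex g is {(g,0)}; the point on the edge
  {g,h} at distance t from g (0<t<1) is {(g,t),(h,1-t)}: each point records its
  distances to the endpoints of the (closed) cell containing it.\<close>
definition cay_points :: "('a, 'b) monoid_scheme \<Rightarrow> 'a set \<Rightarrow> ('a \<times> real) set set" where
  "cay_points G S = {{(g, 0)} | g. g \<in> carrier G} \<union>
     {{(g, t), (h, 1 - t)} | g h t. (g, h) \<in> cay_adj G S \<and> 0 < t \<and> t < 1}"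

text \<open>Path metric of the metric graph with unit-length edges.\<close>
definition cay_dist :: "('a, 'b) monoid_scheme \<Rightarrow> 'a set \<Rightarrow> ('a \<times> real) set \<Rightarrow> ('a \<times> real) set \<Rightarrow> real" where
  "cay_dist G S P P' = Inf
     ({ta + cay_vdist G S a b + tb | a ta b tb. (a, ta) \<in> P \<and> (b, tb) \<in> P'} \<union>
      {\<bar>t - u\<bar> | g h t u. g \<noteq> h \<and> P = {(g, t), (h, 1 - t)} \<and> P' = {(g, u), (h, 1 - u)}})"

definition cay_base :: "('a, 'b) monoid_scheme \<Rightarrow> ('a \<times> real) set" where
  "cay_base G = {(\<one>\<^bsub>G\<^esub>, 0)}"

end

theory Submission
  imports Defs
begin


lemma Inf_pair_real: "Inf {x::real, y} = min x y"
  using cInf_insert[of "{y}" x] by (simp add: inf_min)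

context
  fixes G :: "('a, 'b) monoid_scheme" (structure) and S :: "'a set"
  assumes grp: "group G" and SG: "S \<subseteq> carrier G"
begin

interpretation group G by (rule grp)

lemma adj_carrier: "(g, h) \<in> cay_adj G S \<Longrightarrow> g \<in> carrier G \<and> h \<in> carrier G"
  unfolding cay_adj_def by auto

lemma adj_mult:
  assumes x: "x \<in> carrier G" and gh: "(g, h) \<in> cay_adj G S"
  shows "(x \<otimes> g, x \<otimes> h) \<in> cay_adj G S"
proof -
  from gh obtain s where g: "g \<in> carrier G" and h: "h \<in> carrier G" and ne: "g \<noteq> h"
    and s: "s \<in> S" and e: "h = g \<otimes> s \<or> g = h \<otimes> s"
    unfolding cay_adj_def by auto
  have sc: "s \<in> carrier G" using s SG by auto
  have "x \<otimes> g \<noteq> x \<otimes> h" using ne x g h by simp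
  moreover have "x \<otimes> h = (x \<otimes> g) \<otimes> s \<or> x \<otimes> g = (x \<otimes> h) \<otimes> s"
    using e x g h sc by (auto simp: m_assoc)
  ultimately show ?thesis using s x g h unfolding cay_adj_def by auto
qed

lemma relpow_adj_carrier:
  "(g, h) \<in> cay_adj G S ^^ n \<Longrightarrow> g \<in> carrier G \<Longrightarrow> h \<in> carrier G"
proof (induction n arbitrary: h)
  case 0 then show ?case by simp
next
  case (Suc n)
  then obtain b where "(g, b) \<in> cay_adj G S ^^ n" "(b, h) \<in> cay_adj G S" by auto
  then show ?case using adj_carrier by blast
qed

lemma relpow_mult:
  assumes x: "x \<in> carrier G"
  shows "(g, h) \<in> cay_adj G S ^^ n \<Longrightarrow> (x \<otimes> g, x \<otimes> h) \<in> cay_adj G S ^^ n"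
proof (induction n arbitrary: h)
  case 0 then show ?case by simp
next
  case (Suc n)
  then obtain b where "(g, b) \<in> cay_adj G S ^^ n" "(b, h) \<in> cay_adj G S" by auto
  then show ?case using Suc.IH adj_mult[OF x] by auto
qed

lemma relpow_mult_iff:
  assumes x: "x \<in> carrier G" and g: "g \<in> carrier G" and h: "h \<in> carrier G"
  shows "(x \<otimes> g, x \<otimes> h) \<in> cay_adj G S ^^ n \<longleftrightarrow> (g, h) \<in> cay_adj G S ^^ n"
proof
  assume "(x \<otimes> g, x \<otimes> h) \<in> cay_adj G S ^^ n"
  then have "(inv x \<otimes> (x \<otimes> g), inv x \<otimes> (x \<otimes> h)) \<in> cay_adj G S ^^ n"
    using relpow_mult[of "inv x"] x by auto
  then show "(g, h) \<in> cay_adj G S ^^ n" using x g h by (simp add: m_assoc[symmetric])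
qed (rule relpow_mult[OF x])

lemma vdist_mult:
  assumes x: "x \<in> carrier G" and g: "g \<in> carrier G" and h: "h \<in> carrier G"
  shows "cay_vdist G S (x \<otimes> g) (x \<otimes> h) = cay_vdist G S g h"
  unfolding cay_vdist_def using relpow_mult_iff[OF x g h] by simp

lemma vdist_nat: "\<exists>k::nat. cay_vdist G S g h = real k"
  unfolding cay_vdist_def by auto

context
  assumes gen: "generate G S = carrier G"
begin

lemma reach_gen:
  "y \<in> generate G S \<Longrightarrow> a \<in> carrier G \<Longrightarrow> (a, a \<otimes> y) \<in> (cay_adj G S)\<^sup>*"
proof (induction y arbitrary: a rule: generate.induct)
  case one then show ?case by simp
next
  case (incl s)
  have sc: "s \<in> carrier G" using incl SG by auto
  show ?case
  proof (cases "a = a \<otimes> s")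
    case True then show ?thesis by simp
  next
    case False
    then have "(a, a \<otimes> s) \<in> cay_adj G S" using incl sc unfolding cay_adj_def by auto
    then show ?thesis by auto
  qed
next
  case (inv s)
  have sc: "s \<in> carrier G" using inv SG by auto
  show ?case
  proof (cases "a = a \<otimes> inv s")
    case True then show ?thesis by simp
  next
    case False
    have "a = (a \<otimes> inv s) \<otimes> s" using sc inv.prems by (simp add: m_assoc)
    then have "(a, a \<otimes> inv s) \<in> cay_adj G S" using False inv sc unfolding cay_adj_def by auto
    then show ?thesis by auto
  qed
next
  case (eng h1 h2)
  have c1: "h1 \<in> carrier G" and c2: "h2 \<in> carrier G"
    using eng.hyps generate_in_carrier[OF SG] by auto
  have "(a, a \<otimes> h1) \<in> (cay_adj G S)\<^sup>*" using eng by auto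
  moreover have "(a \<otimes> h1, (a \<otimes> h1) \<otimes> h2) \<in> (cay_adj G S)\<^sup>*"
    using eng.IH(2) eng.prems c1 by auto
  ultimately show ?case using eng.prems c1 c2 by (simp add: m_assoc)
qed

lemma reach:
  assumes a: "a \<in> carrier G" and b: "b \<in> carrier G"
  shows "\<exists>n. (a, b) \<in> cay_adj G S ^^ n"
proof -
  have "inv a \<otimes> b \<in> generate G S" using gen a b by auto
  then have "(a, a \<otimes> (inv a \<otimes> b)) \<in> (cay_adj G S)\<^sup>*" using reach_gen a by auto
  then have "(a, b) \<in> (cay_adj G S)\<^sup>*" using a b by (simp add: m_assoc[symmetric])
  then show ?thesis by (simp add: rtrancl_power)
qed

lemma vdist_0:
  assumes a: "a \<in> carrier G" and b: "b \<in> carrier G" and d: "cay_vdist G S a b < 1"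
  shows "a = b"
proof -
  obtain n where n: "(a, b) \<in> cay_adj G S ^^ n" using reach[OF a b] by auto
  let ?k = "LEAST n. (a, b) \<in> cay_adj G S ^^ n"
  have "(a, b) \<in> cay_adj G S ^^ ?k" using n by (rule LeastI)
  moreover have "?k = 0" using d unfolding cay_vdist_def by simp
  ultimately show ?thesis by simp
qed

lemma vdist_1:
  assumes a: "a \<in> carrier G" and b: "b \<in> carrier G" and d: "cay_vdist G S a b = 1"
  shows "(a, b) \<in> cay_adj G S"
proof -
  obtain n where n: "(a, b) \<in> cay_adj G S ^^ n" using reach[OF a b] by auto
  let ?k = "LEAST n. (a, b) \<in> cay_adj G S ^^ n"
  have "(a, b) \<in> cay_adj G S ^^ ?k" using n by (rule LeastI)
  moreover have "?k = 1" using d unfolding cay_vdist_def by simp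
  ultimately show ?thesis by simp
qed

lemma vdist_refl: "cay_vdist G S a a = 0"
  unfolding cay_vdist_def by (simp add: Least_eq_0)

end
end

definition vtx :: "'a \<Rightarrow> ('a \<times> real) set" where "vtx g = {(g, 0)}"
definition edg :: "'a \<Rightarrow> 'a \<Rightarrow> real \<Rightarrow> ('a \<times> real) set" where "edg g h t = {(g, t), (h, 1 - t)}"

lemma vtx_ne_edg: "g \<noteq> h \<Longrightarrow> vtx a \<noteq> edg g h t"
  unfolding vtx_def edg_def by (auto simp: doubleton_eq_iff)


lemma sing_ne_pair: "g \<noteq> h \<Longrightarrow> {(a, x)} \<noteq> {(g, t), (h, s)}"
proof
  assume ne: "g \<noteq> h" and e: "{(a, x)} = {(g, t), (h, s)}"
  have "(g, t) \<in> {(a, x)}" "(h, s) \<in> {(a, x)}" using e by auto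
  then show False using ne by auto
qed

lemma d_vv: "cay_dist G S (vtx a) (vtx b) = cay_vdist G S a b"
proof -
  have A: "{ta + cay_vdist G S a' b' + tb | a' ta b' tb. (a', ta) \<in> vtx a \<and> (b', tb) \<in> vtx b} = {cay_vdist G S a b}"
    unfolding vtx_def by auto
  have B: "{\<bar>t - u\<bar> | g h t u. g \<noteq> h \<and> vtx a = {(g, t), (h, 1 - t)} \<and> vtx b = {(g, u), (h, 1 - u)}} = {}"
    using sing_ne_pair unfolding vtx_def by auto
  show ?thesis unfolding cay_dist_def A B by simp
qed

lemma d_ve: assumes "g \<noteq> h"
  shows "cay_dist G S (vtx a) (edg g h t) = min (cay_vdist G S a g + t) (cay_vdist G S a h + (1 - t))"
proof -
  have A: "{ta + cay_vdist G S a' b' + tb | a' ta b' tb. (a', ta) \<in> vtx a \<and> (b', tb) \<in> edg g h t}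
     = {cay_vdist G S a g + t, cay_vdist G S a h + (1 - t)}"
    unfolding vtx_def edg_def by auto
  have B: "{\<bar>t' - u\<bar> | g' h' t' u. g' \<noteq> h' \<and> vtx a = {(g', t'), (h', 1 - t')} \<and> edg g h t = {(g', u), (h', 1 - u)}} = {}"
    using sing_ne_pair unfolding vtx_def by auto
  show ?thesis unfolding cay_dist_def A B by (simp add: Inf_pair_real)
qed

lemma d_ev: assumes "g \<noteq> h"
  shows "cay_dist G S (edg g h t) (vtx b) = min (t + cay_vdist G S g b) ((1 - t) + cay_vdist G S h b)"
proof -
  have A: "{ta + cay_vdist G S a' b' + tb | a' ta b' tb. (a', ta) \<in> edg g h t \<and> (b', tb) \<in> vtx b}
     = {t + cay_vdist G S g b, (1 - t) + cay_vdist G S h b}"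
    unfolding vtx_def edg_def by auto
  have B: "{\<bar>t' - u\<bar> | g' h' t' u. g' \<noteq> h' \<and> edg g h t = {(g', t'), (h', 1 - t')} \<and> vtx b = {(g', u), (h', 1 - u)}} = {}"
    using sing_ne_pair unfolding vtx_def by auto
  show ?thesis unfolding cay_dist_def A B by (simp add: Inf_pair_real)
qed


definition tr :: "('a, 'b) monoid_scheme \<Rightarrow> 'a \<Rightarrow> ('a \<times> real) set \<Rightarrow> ('a \<times> real) set" where
  "tr G x P = (\<lambda>(g, t). (x \<otimes>\<^bsub>G\<^esub> g, t)) ` P"

definition dset :: "('a, 'b) monoid_scheme \<Rightarrow> 'a set \<Rightarrow> ('a \<times> real) set \<Rightarrow> ('a \<times> real) set \<Rightarrow> real set" where
  "dset G S P P' = ({ta + cay_vdist G S a b + tb | a ta b tb. (a, ta) \<in> P \<and> (b, tb) \<in> P'} \<union>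
      {\<bar>t - u\<bar> | g h t u. g \<noteq> h \<and> P = {(g, t), (h, 1 - t)} \<and> P' = {(g, u), (h, 1 - u)}})"

lemma cay_dist_dset: "cay_dist G S P P' = Inf (dset G S P P')"
  unfolding cay_dist_def dset_def by simp

lemma tr_vtx: "tr G x (vtx g) = vtx (x \<otimes>\<^bsub>G\<^esub> g)"
  unfolding tr_def vtx_def by simp

lemma tr_edg: "tr G x (edg g h t) = edg (x \<otimes>\<^bsub>G\<^esub> g) (x \<otimes>\<^bsub>G\<^esub> h) t"
  unfolding tr_def edg_def by simp

context
  fixes G :: "('a, 'b) monoid_scheme" (structure) and S :: "'a set"
  assumes grp: "group G" and SG: "S \<subseteq> carrier G"
begin

interpretation group G by (rule grp)

lemma pts_cases:
  assumes "P \<in> cay_points G S"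
  shows "(\<exists>g\<in>carrier G. P = vtx g) \<or> (\<exists>g h t. (g, h) \<in> cay_adj G S \<and> 0 < t \<and> t < 1 \<and> P = edg g h t)"
  using assms unfolding cay_points_def vtx_def edg_def by blast

lemma pts_carrier:
  assumes "P \<in> cay_points G S"
  shows "P \<subseteq> carrier G \<times> UNIV"
  using pts_cases[OF assms]
proof
  assume "\<exists>g\<in>carrier G. P = vtx g" then show ?thesis unfolding vtx_def by auto
next
  assume "\<exists>g h t. (g, h) \<in> cay_adj G S \<and> 0 < t \<and> t < 1 \<and> P = edg g h t"
  then obtain g h t where "(g, h) \<in> cay_adj G S" "P = edg g h t" by auto
  then show ?thesis using adj_carrier[OF grp SG] unfolding edg_def by auto
qed

lemma tr_points:
  assumes x: "x \<in> carrier G" and P: "P \<in> cay_points G S"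
  shows "tr G x P \<in> cay_points G S"
  using pts_cases[OF P]
proof
  assume "\<exists>g\<in>carrier G. P = vtx g"
  then obtain g where "g \<in> carrier G" "P = vtx g" by auto
  then have "tr G x P = vtx (x \<otimes> g)" by (simp add: tr_vtx)
  then show ?thesis using x \<open>g \<in> carrier G\<close> unfolding cay_points_def vtx_def by auto
next
  assume "\<exists>g h t. (g, h) \<in> cay_adj G S \<and> 0 < t \<and> t < 1 \<and> P = edg g h t"
  then obtain g h t where "(g, h) \<in> cay_adj G S" "0 < t" "t < 1" "P = edg g h t" by auto
  moreover have "(x \<otimes> g, x \<otimes> h) \<in> cay_adj G S" using adj_mult[OF grp SG x] calculation by auto
  moreover have "tr G x P = edg (x \<otimes> g) (x \<otimes> h) t" using calculation by (simp add: tr_edg)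
  ultimately show ?thesis unfolding cay_points_def edg_def by blast
qed

lemma tr_inv:
  assumes x: "x \<in> carrier G" and P: "P \<subseteq> carrier G \<times> UNIV"
  shows "tr G (inv x) (tr G x P) = P"
proof -
  have "tr G (inv x) (tr G x P) = (\<lambda>(g, t). (inv x \<otimes> (x \<otimes> g), t)) ` P"
    unfolding tr_def image_image by (simp add: case_prod_beta)
  also have "\<dots> = (\<lambda>p. p) ` P"
    by (rule image_cong) (use P x in \<open>auto simp: m_assoc[symmetric]\<close>)
  finally show ?thesis by simp
qed

lemma tr_carrier:
  assumes x: "x \<in> carrier G" and P: "P \<subseteq> carrier G \<times> UNIV"
  shows "tr G x P \<subseteq> carrier G \<times> UNIV"
  using assms unfolding tr_def by auto

lemma dset_sub:
  assumes x: "x \<in> carrier G" and P: "P \<subseteq> carrier G \<times> UNIV" and P': "P' \<subseteq> carrier G \<times> UNIV"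
  shows "dset G S P P' \<subseteq> dset G S (tr G x P) (tr G x P')"
proof
  fix z assume "z \<in> dset G S P P'"
  then consider (a) a ta b tb where "z = ta + cay_vdist G S a b + tb" "(a, ta) \<in> P" "(b, tb) \<in> P'"
    | (b) g h t u where "z = \<bar>t - u\<bar>" "g \<noteq> h" "P = {(g, t), (h, 1 - t)}" "P' = {(g, u), (h, 1 - u)}"
    unfolding dset_def by blast
  then show "z \<in> dset G S (tr G x P) (tr G x P')"
  proof cases
    case a
    have ac: "a \<in> carrier G" and bc: "b \<in> carrier G" using a P P' by auto
    have "(x \<otimes> a, ta) \<in> tr G x P" "(x \<otimes> b, tb) \<in> tr G x P'" using a unfolding tr_def by force+
    moreover have "z = ta + cay_vdist G S (x \<otimes> a) (x \<otimes> b) + tb"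
      using a vdist_mult[OF grp SG x ac bc] by simp
    ultimately show ?thesis unfolding dset_def by blast
  next
    case b
    have gc: "g \<in> carrier G" and hc: "h \<in> carrier G" using b P by auto
    have "x \<otimes> g \<noteq> x \<otimes> h" using b gc hc x by simp
    moreover have "tr G x P = {(x \<otimes> g, t), (x \<otimes> h, 1 - t)}" "tr G x P' = {(x \<otimes> g, u), (x \<otimes> h, 1 - u)}"
      using b unfolding tr_def by auto
    ultimately show ?thesis using b unfolding dset_def by blast
  qed
qed

lemma dist_tr:
  assumes x: "x \<in> carrier G" and P: "P \<subseteq> carrier G \<times> UNIV" and P': "P' \<subseteq> carrier G \<times> UNIV"
  shows "cay_dist G S (tr G x P) (tr G x P') = cay_dist G S P P'"
proof -
  have "dset G S (tr G x P) (tr G x P') \<subseteq> dset G S (tr G (inv x) (tr G x P)) (tr G (inv x) (tr G x P'))"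
    using dset_sub[of "inv x" "tr G x P" "tr G x P'"] x tr_carrier[OF x P] tr_carrier[OF x P'] by auto
  also have "\<dots> = dset G S P P'" using tr_inv[OF x P] tr_inv[OF x P'] by simp
  finally have "dset G S (tr G x P) (tr G x P') = dset G S P P'" using dset_sub[OF x P P'] by auto
  then show ?thesis unfolding cay_dist_dset by simp
qed

end



lemma is_morse_mono:
  assumes m: "is_morse X d M p I" and le: "\<forall>q\<ge>1. M q \<le> M' q"
  shows "is_morse X d M' p I"
  unfolding is_morse_def
proof (intro conjI allI impI ballI)
  show "\<exists>Q0. quasi_geodesic X d Q0 p I" using m unfolding is_morse_def by blast
next
  fix Q s t \<beta> a b
  assume Q: "1 \<le> Q" and s: "s \<in> I" and t: "t \<in> I" and st: "s \<le> t"
    and h: "a \<le> b \<and> quasi_geodesic X d Q \<beta> {a..b} \<and> \<beta> a = p s \<and> \<beta> b = p t"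
  have "\<beta> ` {a..b} \<subseteq> cl_nbhd d (p ` {s..t}) (M Q)" using m Q s t st h unfolding is_morse_def by blast
  moreover have "cl_nbhd d (p ` {s..t}) (M Q) \<subseteq> cl_nbhd d (p ` {s..t}) (M' Q)"
    using le Q unfolding cl_nbhd_def by force
  ultimately show "\<beta> ` {a..b} \<subseteq> cl_nbhd d (p ` {s..t}) (M' Q)" by blast
qed

lemma is_morse_sub:
  assumes m: "is_morse X d M p I" and J: "J \<subseteq> I" and q: "quasi_geodesic X d Q p J"
  shows "is_morse X d M p J"
  using m J q unfolding is_morse_def by blast

lemma geo_qg:
  assumes g: "geodesic_ray X d x0 \<gamma>" and J: "J \<subseteq> {0..}" "is_interval J" "J \<noteq> {}"
  shows "quasi_geodesic X d 1 \<gamma> J"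
proof -
  have dd: "\<And>s t. s \<in> J \<Longrightarrow> t \<in> J \<Longrightarrow> d (\<gamma> s) (\<gamma> t) = \<bar>s - t\<bar>"
    using g J unfolding geodesic_ray_def by auto
  have "\<gamma> ` J \<subseteq> X" using g J unfolding geodesic_ray_def by auto
  moreover have "\<forall>t\<in>J. \<forall>e>0. \<exists>\<delta>>0. \<forall>s\<in>J. \<bar>s - t\<bar> < \<delta> \<longrightarrow> d (\<gamma> s) (\<gamma> t) < e"
    using dd by (metis)
  ultimately have "mpath X d \<gamma> J" using J unfolding mpath_def by blast
  then show ?thesis unfolding quasi_geodesic_def using dd by (auto simp: abs_minus_commute)
qed

lemma qg_iso:
  assumes f: "\<forall>y\<in>X. \<forall>z\<in>X. f y \<in> X \<and> d (f y) (f z) = d y z"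
    and q: "quasi_geodesic X d Q \<beta> I"
  shows "quasi_geodesic X d Q (f \<circ> \<beta>) I"
proof -
  have bX: "\<beta> ` I \<subseteq> X" using q unfolding quasi_geodesic_def mpath_def by blast
  have dd: "\<And>s t. s \<in> I \<Longrightarrow> t \<in> I \<Longrightarrow> d ((f \<circ> \<beta>) s) ((f \<circ> \<beta>) t) = d (\<beta> s) (\<beta> t)"
    using f bX by auto
  have "(f \<circ> \<beta>) ` I \<subseteq> X" using f bX by auto
  then have "mpath X d (f \<circ> \<beta>) I" using q dd unfolding quasi_geodesic_def mpath_def by simp
  then show ?thesis using q dd unfolding quasi_geodesic_def by simp
qed

lemma morse_transfer:
  assumes m: "is_morse X d M p {a + c..b + c}"
    and fg: "\<forall>y\<in>X. \<phi> y \<in> X \<and> \<psi> y \<in> X \<and> \<psi> (\<phi> y) = y \<and> \<phi> (\<psi> y) = y"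
    and iso: "\<forall>y\<in>X. \<forall>z\<in>X. d (\<phi> y) (\<phi> z) = d y z"
    and pX: "p ` {a + c..b + c} \<subseteq> X"
    and eq: "\<forall>u\<in>{a..b}. p' u = \<phi> (p (u + c))"
    and qg: "quasi_geodesic X d Q p' {a..b}"
  shows "is_morse X d M p' {a..b}"
  unfolding is_morse_def
proof (intro conjI allI impI ballI)
  show "\<exists>Q0. quasi_geodesic X d Q0 p' {a..b}" using qg by blast
next
  fix Q1 s t \<beta> \<alpha> \<omega>
  assume Q1: "1 \<le> Q1" and s: "s \<in> {a..b}" and t: "t \<in> {a..b}" and st: "s \<le> t"
    and h: "\<alpha> \<le> \<omega> \<and> quasi_geodesic X d Q1 \<beta> {\<alpha>..\<omega>} \<and> \<beta> \<alpha> = p' s \<and> \<beta> \<omega> = p' t"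
  have isoP: "\<forall>y\<in>X. \<forall>z\<in>X. \<psi> y \<in> X \<and> d (\<psi> y) (\<psi> z) = d y z"
  proof (intro ballI conjI)
    fix y z assume y: "y \<in> X" and z: "z \<in> X"
    show "\<psi> y \<in> X" using fg y by blast
    have "d (\<phi> (\<psi> y)) (\<phi> (\<psi> z)) = d (\<psi> y) (\<psi> z)" using iso fg y z by blast
    then show "d (\<psi> y) (\<psi> z) = d y z" using fg y z by simp
  qed
  have qb: "quasi_geodesic X d Q1 (\<psi> \<circ> \<beta>) {\<alpha>..\<omega>}" using qg_iso[OF isoP] h by blast
  have bX: "\<beta> ` {\<alpha>..\<omega>} \<subseteq> X" using h unfolding quasi_geodesic_def mpath_def by blast
  have sc: "s + c \<in> {a + c..b + c}" and tc: "t + c \<in> {a + c..b + c}" using s t by auto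
  have psX: "p (s + c) \<in> X" and ptX: "p (t + c) \<in> X" using pX sc tc by auto
  have e1: "(\<psi> \<circ> \<beta>) \<alpha> = p (s + c)" using h eq s fg psX by auto
  have e2: "(\<psi> \<circ> \<beta>) \<omega> = p (t + c)" using h eq t fg ptX by auto
  have inc: "(\<psi> \<circ> \<beta>) ` {\<alpha>..\<omega>} \<subseteq> cl_nbhd d (p ` {s + c..t + c}) (M Q1)"
    using m Q1 sc tc st h qb e1 e2 unfolding is_morse_def by (metis add_le_cancel_right)
  show "\<beta> ` {\<alpha>..\<omega>} \<subseteq> cl_nbhd d (p' ` {s..t}) (M Q1)"
  proof
    fix z assume z: "z \<in> \<beta> ` {\<alpha>..\<omega>}"
    then have zX: "z \<in> X" using bX by blast
    have "\<psi> z \<in> cl_nbhd d (p ` {s + c..t + c}) (M Q1)" using inc z by auto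
    then have I: "Inf ((\<lambda>y. d (\<psi> z) y) ` p ` {s + c..t + c}) \<le> M Q1" unfolding cl_nbhd_def by blast
    have "(\<lambda>y. d z y) ` p' ` {s..t} = (\<lambda>y. d (\<psi> z) y) ` p ` {s + c..t + c}"
    proof (intro equalityI subsetI)
      fix r assume "r \<in> (\<lambda>y. d z y) ` p' ` {s..t}"
      then obtain u where u: "u \<in> {s..t}" "r = d z (p' u)" by auto
      have ua: "u \<in> {a..b}" using u s t by auto
      have pu: "p (u + c) \<in> X" using pX ua by auto
      have "r = d (\<phi> (\<psi> z)) (\<phi> (p (u + c)))" using u eq ua fg zX by auto
      also have "\<dots> = d (\<psi> z) (p (u + c))" using iso fg zX pu by blast
      finally show "r \<in> (\<lambda>y. d (\<psi> z) y) ` p ` {s + c..t + c}" using u by auto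
    next
      fix r assume "r \<in> (\<lambda>y. d (\<psi> z) y) ` p ` {s + c..t + c}"
      then obtain w where w: "w \<in> {s + c..t + c}" "r = d (\<psi> z) (p w)" by auto
      define u where "u = w - c"
      have u: "u \<in> {s..t}" and wu: "w = u + c" using w unfolding u_def by auto
      have ua: "u \<in> {a..b}" using u s t by auto
      have pu: "p (u + c) \<in> X" using pX ua by auto
      have psz: "\<psi> z \<in> X" "\<phi> (\<psi> z) = z" using fg zX by auto
      have "r = d (\<psi> z) (p (u + c))" using w wu by simp
      also have "\<dots> = d (\<phi> (\<psi> z)) (\<phi> (p (u + c)))" using iso psz(1) pu by metis
      also have "\<dots> = d z (p' u)" using eq ua psz by simp
      finally show "r \<in> (\<lambda>y. d z y) ` p' ` {s..t}" using u by auto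
    qed
    then show "z \<in> cl_nbhd d (p' ` {s..t}) (M Q1)" using I st unfolding cl_nbhd_def by auto
  qed
qed



lemma vtx_inj: "vtx a = vtx b \<longleftrightarrow> a = b"
  unfolding vtx_def by auto

definition vert :: "(real \<Rightarrow> ('a \<times> real) set) \<Rightarrow> nat \<Rightarrow> 'a" where
  "vert \<gamma> k = (THE v. \<gamma> (real k) = vtx v)"

lemma vdist_nonneg: "cay_vdist G S a b \<ge> 0"
  unfolding cay_vdist_def by simp

lemma min_cases: "(u::real) = min x y \<Longrightarrow> (u = x \<Longrightarrow> P) \<Longrightarrow> (u = y \<Longrightarrow> P) \<Longrightarrow> P"
  by (cases "x \<le> y") auto

lemma nat_frac: "real k = real m + t \<Longrightarrow> 0 < t \<Longrightarrow> t < 1 \<Longrightarrow> False"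
proof -
  assume a: "real k = real m + t" "0 < t" "t < 1"
  then have "m < k" by linarith
  then have "real m + 1 \<le> real k" by linarith
  then show False using a by linarith
qed

context
  fixes G :: "('a, 'b) monoid_scheme" (structure) and S :: "'a set"
  assumes grp: "group G" and SG: "S \<subseteq> carrier G" and gen: "generate G S = carrier G"
begin

interpretation group G by (rule grp)

lemma base_vtx: "cay_base G = vtx \<one>"
  unfolding cay_base_def vtx_def by simp

lemma adj_ne: "(g, h) \<in> cay_adj G S \<Longrightarrow> g \<noteq> h"
  unfolding cay_adj_def by auto

lemma ray_vertex:
  assumes g: "geodesic_ray (cay_points G S) (cay_dist G S) (cay_base G) \<gamma>"
  shows "\<exists>v\<in>carrier G. \<gamma> (real k) = vtx v"
proof -
  have P: "\<gamma> (real k) \<in> cay_points G S" using g unfolding geodesic_ray_def by auto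
  have d0: "cay_dist G S (\<gamma> 0) (\<gamma> (real k)) = real k" using g unfolding geodesic_ray_def by auto
  have g0: "\<gamma> 0 = vtx \<one>" using g base_vtx unfolding geodesic_ray_def by auto
  show ?thesis using pts_cases[OF grp SG P]
  proof
    assume "\<exists>g h t. (g, h) \<in> cay_adj G S \<and> 0 < t \<and> t < 1 \<and> \<gamma> (real k) = edg g h t"
    then obtain g h t where gh: "(g, h) \<in> cay_adj G S" "0 < t" "t < 1" "\<gamma> (real k) = edg g h t" by auto
    have "real k = min (cay_vdist G S \<one> g + t) (cay_vdist G S \<one> h + (1 - t))"
      using d0 g0 gh d_ve[OF adj_ne[OF gh(1)], of G S "\<one>" t] by simp
    then show ?thesis
    proof (rule min_cases)
      assume "real k = cay_vdist G S \<one> g + t"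
      moreover obtain m where "cay_vdist G S \<one> g = real m" using vdist_nat[OF grp SG] by blast
      ultimately show ?thesis using nat_frac gh by metis
    next
      assume "real k = cay_vdist G S \<one> h + (1 - t)"
      moreover obtain m where "cay_vdist G S \<one> h = real m" using vdist_nat[OF grp SG] by blast
      ultimately have "real k = real m + (1 - t)" by simp
      then show ?thesis using nat_frac[of k m "1 - t"] gh by simp
    qed
  qed
qed

lemma vert:
  assumes g: "geodesic_ray (cay_points G S) (cay_dist G S) (cay_base G) \<gamma>"
  shows "\<gamma> (real k) = vtx (vert \<gamma> k) \<and> vert \<gamma> k \<in> carrier G"
proof -
  obtain v where v: "v \<in> carrier G" "\<gamma> (real k) = vtx v" using ray_vertex[OF g] by blast
  have "vert \<gamma> k = v" unfolding vert_def using v vtx_inj by (metis (mono_tags) the_equality)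
  then show ?thesis using v by simp
qed

lemma ray_step:
  assumes g: "geodesic_ray (cay_points G S) (cay_dist G S) (cay_base G) \<gamma>"
  shows "(vert \<gamma> k, vert \<gamma> (Suc k)) \<in> cay_adj G S"
proof -
  have "cay_dist G S (\<gamma> (real k)) (\<gamma> (real (Suc k))) = 1" using g unfolding geodesic_ray_def by auto
  then have "cay_vdist G S (vert \<gamma> k) (vert \<gamma> (Suc k)) = 1" using vert[OF g, of k] vert[OF g, of "Suc k"] d_vv by metis
  then show ?thesis using vdist_1[OF grp SG gen] vert[OF g] by blast
qed

lemma ray_mid:
  assumes g: "geodesic_ray (cay_points G S) (cay_dist G S) (cay_base G) \<gamma>"
    and u: "0 < u" "u < 1"
  shows "\<gamma> (real k + u) = edg (vert \<gamma> k) (vert \<gamma> (Suc k)) u"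
proof -
  define a where "a = vert \<gamma> k"
  define b where "b = vert \<gamma> (Suc k)"
  have ga: "\<gamma> (real k) = vtx a" and ac: "a \<in> carrier G" using vert[OF g, of k] unfolding a_def by auto
  have "\<gamma> (real (Suc k)) = vtx b" and bc: "b \<in> carrier G" using vert[OF g, of "Suc k"] unfolding b_def by auto
  then have gb: "\<gamma> (real k + 1) = vtx b" by (simp add: add.commute)
  have gd: "\<And>s t. s \<ge> 0 \<Longrightarrow> t \<ge> 0 \<Longrightarrow> cay_dist G S (\<gamma> s) (\<gamma> t) = \<bar>s - t\<bar>"
    using g unfolding geodesic_ray_def by blast
  have "cay_dist G S (\<gamma> (real k)) (\<gamma> (real k + 1)) = \<bar>real k - (real k + 1)\<bar>" by (rule gd) auto
  then have ab: "cay_vdist G S a b = 1" using ga gb d_vv[of G S a b] by simp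
  have "\<gamma> ` {0..} \<subseteq> cay_points G S" using g unfolding geodesic_ray_def by blast
  moreover have "real k + u \<in> {0..}" using u by simp
  ultimately have P: "\<gamma> (real k + u) \<in> cay_points G S" by blast
  have "cay_dist G S (\<gamma> (real k)) (\<gamma> (real k + u)) = \<bar>real k - (real k + u)\<bar>" by (rule gd) (use u in auto)
  then have d1: "cay_dist G S (vtx a) (\<gamma> (real k + u)) = u" using ga u by simp
  have "cay_dist G S (\<gamma> (real k + u)) (\<gamma> (real k + 1)) = \<bar>(real k + u) - (real k + 1)\<bar>" by (rule gd) (use u in auto)
  then have d2: "cay_dist G S (\<gamma> (real k + u)) (vtx b) = 1 - u" using gb u by simp
  show ?thesis using pts_cases[OF grp SG P]
  proof
    assume "\<exists>w\<in>carrier G. \<gamma> (real k + u) = vtx w"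
    then obtain w where "\<gamma> (real k + u) = vtx w" by auto
    then have "cay_vdist G S a w = u" using d1 d_vv[of G S a w] by simp
    moreover obtain m where "cay_vdist G S a w = real m" using vdist_nat[OF grp SG] by blast
    ultimately have "real 0 = real m + (- u)" by simp
    then have "real m = u" by simp
    then show ?thesis using nat_frac[of m 0 u] u by simp
  next
    assume "\<exists>g h t. (g, h) \<in> cay_adj G S \<and> 0 < t \<and> t < 1 \<and> \<gamma> (real k + u) = edg g h t"
    then obtain g h t where gh: "(g, h) \<in> cay_adj G S" "0 < t" "t < 1" "\<gamma> (real k + u) = edg g h t" by auto
    have ne: "g \<noteq> h" using adj_ne[OF gh(1)] .
    have gc: "g \<in> carrier G" and hc: "h \<in> carrier G" using adj_carrier[OF grp SG gh(1)] by auto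
    have e1: "u = min (cay_vdist G S a g + t) (cay_vdist G S a h + (1 - t))"
      using d1 gh d_ve[OF ne, of G S a t] by simp
    have e2: "1 - u = min (t + cay_vdist G S g b) ((1 - t) + cay_vdist G S h b)"
      using d2 gh d_ev[OF ne, of G S t b] by simp
    have nn: "\<And>x y. cay_vdist G S x y \<ge> 0" by (rule vdist_nonneg)
    show ?thesis using e1
    proof (rule min_cases)
      assume c1: "u = cay_vdist G S a g + t"
      then have "a = g" using vdist_0[OF grp SG gen ac gc] u gh by linarith
      then have tu: "t = u" using c1 vdist_refl[OF grp SG gen] by simp
      show ?thesis using e2
      proof (rule min_cases)
        assume "1 - u = t + cay_vdist G S g b"
        then show ?thesis using tu \<open>a = g\<close> ab u by simp
      next
        assume "1 - u = (1 - t) + cay_vdist G S h b"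
        then have "h = b" using vdist_0[OF grp SG gen hc bc] tu by simp
        then show ?thesis using gh \<open>a = g\<close> tu a_def b_def by simp
      qed
    next
      assume c2: "u = cay_vdist G S a h + (1 - t)"
      then have "a = h" using vdist_0[OF grp SG gen ac hc] u gh by linarith
      then have tu: "t = 1 - u" using c2 vdist_refl[OF grp SG gen] by simp
      show ?thesis using e2
      proof (rule min_cases)
        assume "1 - u = t + cay_vdist G S g b"
        then have "g = b" using vdist_0[OF grp SG gen gc bc] tu by simp
        then show ?thesis using gh \<open>a = h\<close> tu a_def b_def unfolding edg_def by auto
      next
        assume "1 - u = (1 - t) + cay_vdist G S h b"
        then show ?thesis using tu \<open>a = h\<close> ab u by simp
      qed
    qed
  qed
qed

end



definition stp :: "('a, 'b) monoid_scheme \<Rightarrow> (real \<Rightarrow> ('a \<times> real) set) \<Rightarrow> nat \<Rightarrow> 'a" where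
  "stp G \<gamma> k = inv\<^bsub>G\<^esub> (vert \<gamma> k) \<otimes>\<^bsub>G\<^esub> vert \<gamma> (Suc k)"

definition wd :: "('a, 'b) monoid_scheme \<Rightarrow> (real \<Rightarrow> ('a \<times> real) set) \<Rightarrow> nat \<Rightarrow> nat \<Rightarrow> 'a list" where
  "wd G \<gamma> n N = map (\<lambda>i. stp G \<gamma> (n + i)) [0..<N]"

context
  fixes G :: "('a, 'b) monoid_scheme" (structure) and S :: "'a set"
  assumes grp: "group G" and SG: "S \<subseteq> carrier G" and gen: "generate G S = carrier G"
begin

interpretation group G by (rule grp)

abbreviation "GR \<gamma> \<equiv> geodesic_ray (cay_points G S) (cay_dist G S) (cay_base G) \<gamma>"

lemma stp_in:
  assumes g: "GR \<gamma>"
  shows "stp G \<gamma> k \<in> S \<union> (\<lambda>s. inv s) ` S"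
proof -
  obtain s where s: "s \<in> S" and e: "vert \<gamma> (Suc k) = vert \<gamma> k \<otimes> s \<or> vert \<gamma> k = vert \<gamma> (Suc k) \<otimes> s"
    using ray_step[OF grp SG gen g, of k] unfolding cay_adj_def by auto
  have sc: "s \<in> carrier G" using s SG by auto
  have a: "vert \<gamma> k \<in> carrier G" and b: "vert \<gamma> (Suc k) \<in> carrier G" using vert[OF grp SG gen g] by auto
  from e show ?thesis
  proof
    assume "vert \<gamma> (Suc k) = vert \<gamma> k \<otimes> s"
    then have "stp G \<gamma> k = s" unfolding stp_def using a sc by (simp add: m_assoc[symmetric])
    then show ?thesis using s by auto
  next
    assume "vert \<gamma> k = vert \<gamma> (Suc k) \<otimes> s"
    then have "stp G \<gamma> k = inv s" unfolding stp_def using b sc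
      by (simp add: inv_mult_group m_assoc)
    then show ?thesis using s by auto
  qed
qed

lemma wd_in:
  assumes g: "GR \<gamma>"
  shows "wd G \<gamma> n N \<in> {xs. set xs \<subseteq> S \<union> (\<lambda>s. inv s) ` S \<and> length xs = N}"
  using stp_in[OF g] unfolding wd_def by auto

lemma vert_shift:
  assumes g: "GR \<gamma>" and g': "GR \<gamma>'" and w: "wd G \<gamma> n N = wd G \<gamma>' n' N"
  shows "i \<le> N \<Longrightarrow> vert \<gamma> (n + i) = (vert \<gamma> n \<otimes> inv (vert \<gamma>' n')) \<otimes> vert \<gamma>' (n' + i)"
proof (induction i)
  case 0
  have a: "vert \<gamma> n \<in> carrier G" and b: "vert \<gamma>' n' \<in> carrier G"
    using vert[OF grp SG gen g] vert[OF grp SG gen g'] by auto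
  then show ?case by (simp add: m_assoc)
next
  case (Suc i)
  have "stp G \<gamma> (n + i) = stp G \<gamma>' (n' + i)"
  proof -
    have "wd G \<gamma> n N ! i = wd G \<gamma>' n' N ! i" using w by simp
    then show ?thesis using Suc.prems unfolding wd_def by simp
  qed
  have c: "\<And>m. vert \<gamma> m \<in> carrier G" "\<And>m. vert \<gamma>' m \<in> carrier G"
    using vert[OF grp SG gen g] vert[OF grp SG gen g'] by auto
  have s1: "vert \<gamma> (Suc (n + i)) = vert \<gamma> (n + i) \<otimes> stp G \<gamma> (n + i)"
    unfolding stp_def using c by (simp add: m_assoc[symmetric])
  have s2: "vert \<gamma>' (Suc (n' + i)) = vert \<gamma>' (n' + i) \<otimes> stp G \<gamma>' (n' + i)"
    unfolding stp_def using c by (simp add: m_assoc[symmetric])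
  have "vert \<gamma> (n + Suc i) = vert \<gamma> (n + i) \<otimes> stp G \<gamma> (n + i)" using s1 by simp
  also have "\<dots> = ((vert \<gamma> n \<otimes> inv (vert \<gamma>' n')) \<otimes> vert \<gamma>' (n' + i)) \<otimes> stp G \<gamma>' (n' + i)"
    using Suc \<open>stp G \<gamma> (n + i) = stp G \<gamma>' (n' + i)\<close> by simp
  also have "\<dots> = (vert \<gamma> n \<otimes> inv (vert \<gamma>' n')) \<otimes> vert \<gamma>' (n' + Suc i)"
    using s2 c unfolding stp_def by (simp add: m_assoc)
  finally show ?case .
qed

lemma window_eq:
  assumes g: "GR \<gamma>" and g': "GR \<gamma>'" and w: "wd G \<gamma> n N = wd G \<gamma>' n' N"
    and r: "r \<in> {0..real N}"
  shows "\<gamma> (real n + r) = tr G (vert \<gamma> n \<otimes> inv (vert \<gamma>' n')) (\<gamma>' (real n' + r))"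
proof -
  define x where "x = vert \<gamma> n \<otimes> inv (vert \<gamma>' n')"
  define i where "i = nat \<lfloor>r\<rfloor>"
  define u where "u = r - real i"
  have f0: "\<lfloor>r\<rfloor> \<ge> 0" using r by simp
  have ii: "real i = of_int \<lfloor>r\<rfloor>" unfolding i_def using f0 by simp
  have ri: "real i \<le> r" "r < real i + 1" using ii of_int_floor_le[of r] real_of_int_floor_add_one_gt[of r] by linarith+
  have "real i \<le> real N" using ri r by auto
  then have iN: "i \<le> N" by simp
  have sh: "\<And>j. j \<le> N \<Longrightarrow> vert \<gamma> (n + j) = x \<otimes> vert \<gamma>' (n' + j)"
    using vert_shift[OF g g' w] unfolding x_def by blast
  show ?thesis
  proof (cases "u = 0")
    case True
    then have rr: "r = real i" unfolding u_def by simp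
    have "\<gamma> (real n + r) = \<gamma> (real (n + i))" using rr by simp
    also have "\<dots> = vtx (vert \<gamma> (n + i))" using vert[OF grp SG gen g] by blast
    also have "\<dots> = tr G x (vtx (vert \<gamma>' (n' + i)))" using sh[OF iN] by (simp add: tr_vtx)
    also have "\<dots> = tr G x (\<gamma>' (real (n' + i)))" using vert[OF grp SG gen g'] by metis
    finally show ?thesis unfolding x_def using rr by simp
  next
    case False
    then have u: "0 < u" "u < 1" using ri unfolding u_def by auto
    have "real i < real N" using ri r u unfolding u_def by auto
    then have iN': "i < N" by simp
    have "\<gamma> (real n + r) = \<gamma> (real (n + i) + u)" unfolding u_def by simp
    also have "\<dots> = edg (vert \<gamma> (n + i)) (vert \<gamma> (Suc (n + i))) u" using ray_mid[OF grp SG gen g u] by blast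
    also have "\<dots> = tr G x (edg (vert \<gamma>' (n' + i)) (vert \<gamma>' (Suc (n' + i))) u)"
      using sh[of i] sh[of "Suc i"] iN' by (simp add: tr_edg)
    also have "\<dots> = tr G x (\<gamma>' (real (n' + i) + u))" using ray_mid[OF grp SG gen g' u] by metis
    finally show ?thesis unfolding x_def u_def by simp
  qed
qed

lemma window_morse:
  assumes g: "GR \<gamma>" and g': "GR \<gamma>'" and w: "wd G \<gamma> n N = wd G \<gamma>' n' N"
    and m: "is_morse (cay_points G S) (cay_dist G S) M \<gamma>' {real n'..real n' + real N}"
  shows "is_morse (cay_points G S) (cay_dist G S) M \<gamma> {real n..real n + real N}"
proof -
  define x where "x = vert \<gamma> n \<otimes> inv (vert \<gamma>' n')"
  have xc: "x \<in> carrier G" unfolding x_def using vert[OF grp SG gen g] vert[OF grp SG gen g'] by auto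
  define c where "c = real n' - real n"
  have m': "is_morse (cay_points G S) (cay_dist G S) M \<gamma>' {real n + c..real n + real N + c}"
  proof -
    have e1: "real n + c = real n'" and e2: "real n + real N + c = real n' + real N" unfolding c_def by simp_all
    show ?thesis unfolding e1 e2 by (rule m)
  qed
  have fg: "\<forall>y\<in>cay_points G S. tr G x y \<in> cay_points G S \<and> tr G (inv x) y \<in> cay_points G S \<and>
      tr G (inv x) (tr G x y) = y \<and> tr G x (tr G (inv x) y) = y"
  proof
    fix y assume y: "y \<in> cay_points G S"
    have "tr G (inv (inv x)) (tr G (inv x) y) = y" using tr_inv[OF grp SG _ pts_carrier[OF grp SG y], of "inv x"] xc by simp
    then show "tr G x y \<in> cay_points G S \<and> tr G (inv x) y \<in> cay_points G S \<and>
      tr G (inv x) (tr G x y) = y \<and> tr G x (tr G (inv x) y) = y"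
      using tr_points[OF grp SG xc y] tr_points[OF grp SG _ y, of "inv x"] xc
        tr_inv[OF grp SG xc pts_carrier[OF grp SG y]] by simp
  qed
  have iso: "\<forall>y\<in>cay_points G S. \<forall>z\<in>cay_points G S. cay_dist G S (tr G x y) (tr G x z) = cay_dist G S y z"
    using dist_tr[OF grp SG xc] pts_carrier[OF grp SG] by blast
  have pX: "\<gamma>' ` {real n + c..real n + real N + c} \<subseteq> cay_points G S"
    using g' unfolding geodesic_ray_def c_def by auto
  have eq: "\<forall>u\<in>{real n..real n + real N}. \<gamma> u = tr G x (\<gamma>' (u + c))"
  proof
    fix u assume u: "u \<in> {real n..real n + real N}"
    have "\<gamma> (real n + (u - real n)) = tr G x (\<gamma>' (real n' + (u - real n)))"
      using window_eq[OF g g' w, of "u - real n"] u unfolding x_def by auto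
    then show "\<gamma> u = tr G x (\<gamma>' (u + c))" unfolding c_def by (simp add: algebra_simps)
  qed
  have qg: "quasi_geodesic (cay_points G S) (cay_dist G S) 1 \<gamma> {real n..real n + real N}"
    by (rule geo_qg[OF g]) (auto simp: is_interval_cc)
  show ?thesis by (rule morse_transfer[OF m' fg iso pX eq qg])
qed

end



lemma gauge_max:
  assumes f: "morse_gauge f" and g: "morse_gauge g"
  shows "morse_gauge (\<lambda>q. max (f q) (g q))"
proof -
  have "mono_on {1..} (\<lambda>q. max (f q) (g q))"
  proof (rule mono_onI)
    fix r s :: real assume "r \<in> {1..}" "s \<in> {1..}" "r \<le> s"
    moreover have "mono_on {1..} f" "mono_on {1..} g" using f g unfolding morse_gauge_def by auto
    ultimately have "f r \<le> f s" "g r \<le> g s" by (auto intro: mono_onD)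
    then show "max (f r) (g r) \<le> max (f s) (g s)" by (rule max.mono)
  qed
  moreover have "continuous_on {1..} (\<lambda>q. max (f q) (g q))"
    using f g unfolding morse_gauge_def by (intro continuous_on_max) auto
  moreover have "\<forall>q\<ge>1. max (f q) (g q) \<ge> 0" using f unfolding morse_gauge_def by (auto simp: le_max_iff_disj)
  ultimately show ?thesis unfolding morse_gauge_def by blast
qed

lemma gauge_zero: "morse_gauge (\<lambda>q. 0)"
  unfolding morse_gauge_def mono_on_def by (auto intro: continuous_on_const)

lemma stratum_mono:
  assumes "\<forall>q\<ge>1. M q \<le> M' q"
  shows "morse_stratum X d x0 M \<subseteq> morse_stratum X d x0 M'"
  unfolding morse_stratum_def using is_morse_mono[OF _ assms] by blast

theorem theorem4p3:
  fixes G :: "('a, 'b) monoid_scheme" and S :: "'a set"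
  assumes "group G"
    and "finite S" and "S \<subseteq> carrier G" and "generate G S = carrier G"
    and "MLTG (cay_points G S) (cay_dist G S)"
  shows "strongly_sigma_compact (cay_points G S) (cay_dist G S) (cay_base G)"
proof -
  note grp = assms(1) and fin = assms(2) and SG = assms(3) and gen = assms(4) and ml = assms(5)
  define X where "X = cay_points G S"
  define d where "d = cay_dist G S"
  define x0 where "x0 = cay_base G"
  define ch where "ch M = (SOME LM. morse_gauge (snd LM) \<and>
      (\<forall>p I. locally_morse_qg X d (fst LM) M 1 p I \<longrightarrow> is_morse X d (snd LM) p I))" for M
  have ch: "morse_gauge (snd (ch M)) \<and> (\<forall>p I. locally_morse_qg X d (fst (ch M)) M 1 p I \<longrightarrow> is_morse X d (snd (ch M)) p I)"
    if M: "morse_gauge M" for M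
  proof -
    obtain L Q' M' where "morse_gauge M'" "\<forall>p I. locally_morse_qg X d L M 1 p I \<longrightarrow> is_morse X d M' p I"
    proof -
      have A: "\<forall>Q\<ge>1. \<forall>M. morse_gauge M \<longrightarrow> (\<exists>L Q' M'. Q' \<ge> 1 \<and> morse_gauge M' \<and>
         (\<forall>p I. locally_morse_qg X d L M Q p I \<longrightarrow> quasi_geodesic X d Q' p I \<and> is_morse X d M' p I))"
        using ml unfolding MLTG_def X_def d_def .
      have "\<exists>L Q' M'. Q' \<ge> 1 \<and> morse_gauge M' \<and>
         (\<forall>p I. locally_morse_qg X d L M 1 p I \<longrightarrow> quasi_geodesic X d Q' p I \<and> is_morse X d M' p I)"
        using A M by simp
      then show ?thesis using that by blast
    qed
    then have "\<exists>LM. morse_gauge (snd LM) \<and> (\<forall>p I. locally_morse_qg X d (fst LM) M 1 p I \<longrightarrow> is_morse X d (snd LM) p I)"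
      by (intro exI[of _ "(L, M')"]) simp
    then show ?thesis unfolding ch_def by (rule someI_ex)
  qed
  define NN where "NN M = nat \<lceil>fst (ch M)\<rceil> + 1" for M
  define T where "T = S \<union> (\<lambda>s. inv\<^bsub>G\<^esub> s) ` S"
  define W where "W M = {wd G \<gamma> n (NN M) | \<gamma> n. geodesic_ray X d x0 \<gamma> \<and> is_morse X d M \<gamma> {0..}}" for M
  define \<kappa> where "\<kappa> M = (NN M, W M)" for M
  define R where "R = \<kappa> ` {M. morse_gauge M}"
  have Rsub: "R \<subseteq> (SIGMA N:UNIV. Pow {xs. set xs \<subseteq> T \<and> length xs = N})"
  proof
    fix P assume "P \<in> R"
    then obtain M where P: "P = \<kappa> M" unfolding R_def by blast
    have "W M \<subseteq> {xs. set xs \<subseteq> T \<and> length xs = NN M}"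
    proof
      fix xs assume "xs \<in> W M"
      then obtain \<gamma> n where xs: "xs = wd G \<gamma> n (NN M)" and g: "geodesic_ray X d x0 \<gamma>" unfolding W_def by blast
      have "geodesic_ray (cay_points G S) (cay_dist G S) (cay_base G) \<gamma>" using g unfolding X_def d_def x0_def .
      then show "xs \<in> {xs. set xs \<subseteq> T \<and> length xs = NN M}" using wd_in[OF grp SG gen] unfolding xs T_def by blast
    qed
    then show "P \<in> (SIGMA N:UNIV. Pow {xs. set xs \<subseteq> T \<and> length xs = N})" unfolding P \<kappa>_def by simp
  qed
  have "countable (SIGMA N:UNIV. Pow {xs. set xs \<subseteq> T \<and> length xs = N})"
  proof (rule countable_SIGMA)
    have finT: "finite T" using fin unfolding T_def by simp
    fix N :: nat
    show "countable (Pow {xs. set xs \<subseteq> T \<and> length xs = N})"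
      by (rule countable_finite) (simp add: finite_lists_length_eq[OF finT])
  qed simp
  then have cR: "countable R" using Rsub countable_subset by blast
  have "\<kappa> (\<lambda>q. 0) \<in> R" unfolding R_def by (rule imageI) (simp add: gauge_zero)
  then have neR: "R \<noteq> {}" by auto
  define e where "e = from_nat_into R"
  define rep where "rep P = (SOME M. morse_gauge M \<and> \<kappa> M = P)" for P
  have rep: "morse_gauge (rep (e k)) \<and> \<kappa> (rep (e k)) = e k" for k
  proof -
    have "e k \<in> R" unfolding e_def by (rule from_nat_into[OF neR])
    then obtain M where "M \<in> {M. morse_gauge M}" "e k = \<kappa> M" unfolding R_def by (rule imageE)
    then have "\<exists>M. morse_gauge M \<and> \<kappa> M = e k" by auto
    then show ?thesis unfolding rep_def by (rule someI_ex)
  qed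
  define K where "K k = snd (ch (rep (e k)))" for k
  have gK: "morse_gauge (K k)" for k unfolding K_def using ch rep by blast
  define Ms where "Ms = rec_nat (K 0) (\<lambda>n f q. max (f q) (K (Suc n) q))"
  have Ms0: "Ms 0 = K 0" and MsS: "Ms (Suc n) = (\<lambda>q. max (Ms n q) (K (Suc n) q))" for n
    unfolding Ms_def by simp_all
  have gMs: "morse_gauge (Ms n)" for n
    by (induction n) (simp_all add: Ms0 MsS gK gauge_max)
  have incMs: "\<forall>n. \<forall>q\<ge>1. Ms n q \<le> Ms (Suc n) q" by (simp add: MsS)
  have KMs: "\<forall>q\<ge>1. K k q \<le> Ms k q" for k
    by (cases k) (simp_all add: Ms0 MsS)
  have key: "\<exists>k. \<forall>\<gamma>. geodesic_ray X d x0 \<gamma> \<and> is_morse X d M \<gamma> {0..} \<longrightarrow> is_morse X d (K k) \<gamma> {0..}"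
    if M: "morse_gauge M" for M
  proof -
    have "\<kappa> M \<in> R" unfolding R_def using M by blast
    then obtain k where k: "e k = \<kappa> M" unfolding e_def using from_nat_into_surj[OF cR] by blast
    define M0 where "M0 = rep (e k)"
    have M0: "morse_gauge M0" "\<kappa> M0 = \<kappa> M" using rep[of k] k unfolding M0_def by auto
    define L where "L = fst (ch M0)"
    have chM0: "\<forall>p I. locally_morse_qg X d L M0 1 p I \<longrightarrow> is_morse X d (K k) p I"
      using ch[OF M0(1)] unfolding L_def K_def M0_def by blast
    define N where "N = NN M0"
    have NW: "W M0 = W M" "NN M = N" using M0(2) unfolding \<kappa>_def N_def by auto
    have NL: "real N \<ge> L + 1" unfolding N_def NN_def L_def using real_nat_ceiling_ge by simp
    show ?thesis
    proof (intro exI allI impI)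
      fix \<gamma> assume h: "geodesic_ray X d x0 \<gamma> \<and> is_morse X d M \<gamma> {0..}"
      have g: "geodesic_ray (cay_points G S) (cay_dist G S) (cay_base G) \<gamma>" using h unfolding X_def d_def x0_def by simp
      have "locally_morse_qg X d L M0 1 \<gamma> {0..}"
        unfolding locally_morse_qg_def
      proof (intro conjI ballI allI impI)
        show "mpath X d \<gamma> {0..}" using geo_qg[OF g, of "{0..}"] unfolding quasi_geodesic_def X_def d_def
          by (auto simp: is_interval_ci)
      next
        fix s t assume s: "s \<in> {0::real..}" and t: "t \<in> {0::real..}" and st: "s \<le> t \<and> t - s \<le> L"
        show qst: "quasi_geodesic X d 1 \<gamma> {s..t}" using geo_qg[OF g, of "{s..t}"] s t st unfolding X_def d_def
          by (auto simp: is_interval_cc)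
        define n where "n = nat \<lfloor>s\<rfloor>"
        have ns: "real n \<le> s" "s < real n + 1" unfolding n_def using s of_int_floor_le[of s] real_of_int_floor_add_one_gt[of s]
          by auto
        have "wd G \<gamma> n N \<in> W M" unfolding W_def using h NW(2) by blast
        then have "wd G \<gamma> n N \<in> W M0" using NW by simp
        then obtain \<gamma>' n' where g': "geodesic_ray X d x0 \<gamma>'" and m': "is_morse X d M0 \<gamma>' {0..}"
          and w: "wd G \<gamma> n N = wd G \<gamma>' n' N" unfolding W_def N_def by auto
        have g'': "geodesic_ray (cay_points G S) (cay_dist G S) (cay_base G) \<gamma>'" using g' unfolding X_def d_def x0_def by simp
        have "is_morse X d M0 \<gamma>' {real n'..real n' + real N}"
          by (rule is_morse_sub[OF m' _ geo_qg[OF g']]) (auto simp: is_interval_cc)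
        then have "is_morse X d M0 \<gamma> {real n..real n + real N}"
          using window_morse[OF grp SG gen g g'' w] unfolding X_def d_def by simp
        moreover have "{s..t} \<subseteq> {real n..real n + real N}" using ns st NL by auto
        ultimately show "is_morse X d M0 \<gamma> {s..t}" using is_morse_sub qst by blast
      qed
      then show "is_morse X d (K k) \<gamma> {0..}" using chM0 by blast
    qed
  qed
  have cof: "\<exists>n. morse_stratum X d x0 M \<subseteq> morse_stratum X d x0 (Ms n)" if M: "morse_gauge M" for M
  proof -
    obtain k where k: "\<forall>\<gamma>. geodesic_ray X d x0 \<gamma> \<and> is_morse X d M \<gamma> {0..} \<longrightarrow> is_morse X d (K k) \<gamma> {0..}"
      using key[OF M] by blast
    have "morse_stratum X d x0 M \<subseteq> morse_stratum X d x0 (K k)"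
      unfolding morse_stratum_def using k by blast
    also have "\<dots> \<subseteq> morse_stratum X d x0 (Ms k)" by (rule stratum_mono[OF KMs])
    finally show ?thesis by blast
  qed
  have bd: "morse_boundary X d x0 = (\<Union>n. morse_stratum X d x0 (Ms n))"
  proof (intro equalityI subsetI)
    fix z assume "z \<in> morse_boundary X d x0"
    then obtain \<gamma> M where z: "z = ray_class X d x0 \<gamma>" and g: "geodesic_ray X d x0 \<gamma>"
      and M: "morse_gauge M" and m: "is_morse X d M \<gamma> {0..}"
      unfolding morse_boundary_def morse_ray_def by blast
    have "z \<in> morse_stratum X d x0 M" unfolding morse_stratum_def z using g m by blast
    then show "z \<in> (\<Union>n. morse_stratum X d x0 (Ms n))" using cof[OF M] by blast
  next
    fix z assume "z \<in> (\<Union>n. morse_stratum X d x0 (Ms n))"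
    then obtain n \<gamma> where z: "z = ray_class X d x0 \<gamma>" and g: "geodesic_ray X d x0 \<gamma>"
      and m: "is_morse X d (Ms n) \<gamma> {0..}"
      unfolding morse_stratum_def by blast
    then have "morse_ray X d x0 \<gamma>" unfolding morse_ray_def using gMs by blast
    then show "z \<in> morse_boundary X d x0" unfolding morse_boundary_def z by blast
  qed
  have "strongly_sigma_compact X d x0"
    unfolding strongly_sigma_compact_def using gMs incMs bd cof by blast
  then show ?thesis unfolding X_def d_def x0_def .
qed


end
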